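(* Let $n\ge2$ be an integer and $\lambda>0$, and let $\gamma(t)=(\omega(t),x(t),y(t))$, $t\in(S,T)$ the maximal interval of existence, be a solution with $\omega>0$ of the system $$\frac{d\omega}{dt}=x\omega,\qquad \frac{dx}{dt}=x^2-xy+n-1-\lambda\omega^2,\qquad \frac{dy}{dt}=xy-nx^2-\lambda\omega^2.$$ Suppose $x(t_0)>1$ and $\frac{dx}{dt}(t_0)>0$ at some $t_0\in(S,T)$. Then $\int_{t_0}^T\omega(\sigma)\,d\sigma<\infty$. *)

theory Defs
  imports "HOL-Analysis.Analysis"
begin

definition eIoo :: "ereal \<Rightarrow> ereal \<Rightarrow> real set" where
  "eIoo S T = {t. S < ereal t \<and> ereal t < T}"

definition is_sol :: "nat \<Rightarrow> real \<Rightarrow> real set \<Rightarrow> (real \<Rightarrow> real) \<Rightarrow> (real \<Rightarrow> real) \<Rightarrow> (real \<Rightarrow> real) \<Rightarrow> bool" where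
  "is_sol n lam I w x y \<longleftrightarrow>
     (\<forall>t\<in>I. (w has_real_derivative (x t * w t)) (at t) \<and>
            (x has_real_derivative (x t ^ 2 - x t * y t + real n - 1 - lam * w t ^ 2)) (at t) \<and>
            (y has_real_derivative (x t * y t - real n * x t ^ 2 - lam * w t ^ 2)) (at t))"

definition is_maximal_sol :: "nat \<Rightarrow> real \<Rightarrow> ereal \<Rightarrow> ereal \<Rightarrow> (real \<Rightarrow> real) \<Rightarrow> (real \<Rightarrow> real) \<Rightarrow> (real \<Rightarrow> real) \<Rightarrow> bool" where
  "is_maximal_sol n lam S T w x y \<longleftrightarrow>
     S < T \<and> is_sol n lam (eIoo S T) w x y \<and>
     (\<forall>S' T' w' x' y'. S' \<le> S \<and> T \<le> T' \<and> is_sol n lam (eIoo S' T') w' x' y' \<and>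
        (\<forall>t\<in>eIoo S T. w' t = w t \<and> x' t = x t \<and> y' t = y t) \<longrightarrow> S' = S \<and> T' = T)"

end

theory Submission
  imports Defs
begin


lemma mono_deriv:
  fixes f f' :: "real \<Rightarrow> real"
  assumes "a \<le> b" "\<And>t. a \<le> t \<Longrightarrow> t \<le> b \<Longrightarrow> (f has_real_derivative f' t) (at t)"
    "\<And>t. a \<le> t \<Longrightarrow> t \<le> b \<Longrightarrow> f' t \<ge> 0"
  shows "f a \<le> f b"
proof (rule DERIV_nonneg_imp_increasing_open[OF assms(1)])
  show "continuous_on {a..b} f"
  proof (intro continuous_at_imp_continuous_on ballI)
    fix t assume "t \<in> {a..b}"
    then show "isCont f t" using assms(2) DERIV_isCont by auto
  qed
next
  fix t assume "a < t" "t < b"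
  then show "\<exists>y. (f has_real_derivative y) (at t) \<and> 0 \<le> y"
    using assms(2,3) by (meson less_imp_le)
qed

lemma test:
  fixes x y w :: "real \<Rightarrow> real" and t lam :: real and n :: nat
  assumes dx: "(x has_real_derivative (x t ^ 2 - x t * y t + real n - 1 - lam * w t ^ 2)) (at t)"
   and dy: "(y has_real_derivative (x t * y t - real n * x t ^ 2 - lam * w t ^ 2)) (at t)"
   and dw: "(w has_real_derivative (x t * w t)) (at t)"
  shows "((\<lambda>t. x t ^ 2 - x t * y t + real n - 1 - lam * w t ^ 2) has_real_derivative
     (x t ^ 2 - x t * y t + real n - 1 - lam * w t ^ 2) * (3 * x t - y t) + (real n - 1) * x t * (x t ^ 2 - 1)) (at t)"
proof -
  have "((\<lambda>t. x t ^ 2 - x t * y t + real n - 1 - lam * w t ^ 2) has_real_derivative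
     (2 * x t * (x t ^ 2 - x t * y t + real n - 1 - lam * w t ^ 2)
      - ((x t ^ 2 - x t * y t + real n - 1 - lam * w t ^ 2) * y t + x t * (x t * y t - real n * x t ^ 2 - lam * w t ^ 2))
      - lam * (2 * w t * (x t * w t)))) (at t)"
    by (rule derivative_eq_intros dx dy dw refl | simp)+ 
  then show ?thesis
    by (rule DERIV_cong) (simp add: algebra_simps power2_eq_square power3_eq_cube)
qed


lemma tail_lemma:
  fixes g :: "real \<Rightarrow> real" and t1 K :: real and T :: ereal
  assumes T1: "ereal t1 < T" and cont: "continuous_on {t. t1 \<le> t \<and> ereal t < T} g"
   and bnd: "\<And>s. t1 \<le> s \<Longrightarrow> ereal s < T \<Longrightarrow> (\<integral>\<^sup>+t. ennreal (g t) * indicator {t1..s} t \<partial>lborel) \<le> ennreal K"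
  shows "(\<integral>\<^sup>+t. ennreal (g t) * indicator {t. t1 \<le> t \<and> ereal t < T} t \<partial>lborel) \<le> ennreal K"
proof -
  define J1 where "J1 = {t. t1 \<le> t \<and> ereal t < T}"
  have "\<exists>s::nat \<Rightarrow> real. incseq s \<and> (\<forall>k. t1 \<le> s k \<and> ereal (s k) < T) \<and>
          (\<forall>t. t1 \<le> t \<longrightarrow> ereal t < T \<longrightarrow> (\<exists>k. t \<le> s k))"
  proof (cases T)
    case (real Tr)
    with T1 have lt: "t1 < Tr" by simp
    define s where "s = (\<lambda>k::nat. Tr - (Tr - t1) / (real k + 1))"
    have "incseq s" unfolding s_def incseq_def
      using lt by (auto intro!: divide_left_mono mult_pos_pos)
    moreover have "\<forall>k. t1 \<le> s k \<and> ereal (s k) < T"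
    proof
      fix k
      have "(Tr - t1) / (real k + 1) \<le> Tr - t1" using lt by (simp add: divide_le_eq)
      moreover have "(Tr - t1) / (real k + 1) > 0" using lt by simp
      ultimately show "t1 \<le> s k \<and> ereal (s k) < T" unfolding s_def using real by auto
    qed
    moreover have "\<forall>t. t1 \<le> t \<longrightarrow> ereal t < T \<longrightarrow> (\<exists>k. t \<le> s k)"
    proof (intro allI impI)
      fix t assume "t1 \<le> t" "ereal t < T"
      then have tT: "t < Tr" using real by simp
      obtain k :: nat where k: "(Tr - t1) / (Tr - t) < real k" using reals_Archimedean2 by blast
      then have "(Tr - t1) < real k * (Tr - t)" using tT by (simp add: divide_less_eq)
      then have "(Tr - t1) \<le> (real k + 1) * (Tr - t)" using tT by (simp add: algebra_simps)
      then have "(Tr - t1) / (real k + 1) \<le> Tr - t" by (simp add: divide_le_eq mult.commute)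
      then show "\<exists>k. t \<le> s k" unfolding s_def by (intro exI[of _ k]) simp
    qed
    ultimately show ?thesis by blast
  next
    case PInf
    define s where "s = (\<lambda>k::nat. t1 + real k)"
    have "incseq s" unfolding s_def incseq_def by auto
    moreover have "\<forall>k. t1 \<le> s k \<and> ereal (s k) < T" unfolding s_def using PInf by auto
    moreover have "\<forall>t. t1 \<le> t \<longrightarrow> ereal t < T \<longrightarrow> (\<exists>k. t \<le> s k)"
    proof (intro allI impI)
      fix t
      obtain k :: nat where "t - t1 < real k" using reals_Archimedean2 by blast
      then show "\<exists>k. t \<le> s k" unfolding s_def by (intro exI[of _ k]) simp
    qed
    ultimately show ?thesis by blast
  next
    case MInf with T1 show ?thesis by simp
  qed
  then obtain s :: "nat \<Rightarrow> real" where sinc: "incseq s" and sJ: "\<And>k. t1 \<le> s k \<and> ereal (s k) < T"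
    and scov: "\<And>t. t1 \<le> t \<Longrightarrow> ereal t < T \<Longrightarrow> \<exists>k. t \<le> s k" by blast
  define f where "f = (\<lambda>k t. ennreal (g t) * indicator {t1..s k} t)"
  have sub: "{t1..s k} \<subseteq> J1" for k using sJ[of k] unfolding J1_def
    by auto (meson ereal_less_eq(3) order.strict_trans1)
  have meas: "f k \<in> borel_measurable lborel" for k
  proof -
    have c: "continuous_on {t1..s k} g" using cont sub[of k] unfolding J1_def
      by (rule continuous_on_subset)
    have "(\<lambda>t. indicator {t1..s k} t *\<^sub>R g t) \<in> borel_measurable borel"
      by (rule borel_measurable_continuous_on_indicator[OF _ c]) simp
    then have "(\<lambda>t. ennreal (indicator {t1..s k} t *\<^sub>R g t)) \<in> borel_measurable borel"
      by measurable
    moreover have "(\<lambda>t. ennreal (indicator {t1..s k} t *\<^sub>R g t)) = f k"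
      unfolding f_def by (auto simp: fun_eq_iff split: split_indicator)
    ultimately show ?thesis by simp
  qed
  have finc: "incseq f"
  proof (rule incseq_SucI, rule le_funI)
    fix k t
    have "s k \<le> s (Suc k)" using sinc by (simp add: incseq_Suc_iff)
    then show "f k t \<le> f (Suc k) t" unfolding f_def
      by (auto split: split_indicator)
  qed
  have pt: "ennreal (g t) * indicator J1 t = (SUP k. f k t)" for t
  proof (cases "t \<in> J1")
    case True
    then obtain k where "t \<le> s k" using scov unfolding J1_def by blast
    then have tk: "f k t = ennreal (g t)" using True unfolding f_def J1_def by auto
    have "(SUP k. f k t) = ennreal (g t)"
    proof (rule antisym)
      show "(SUP k. f k t) \<le> ennreal (g t)"
        by (rule SUP_least) (auto simp: f_def split: split_indicator)
      show "ennreal (g t) \<le> (SUP k. f k t)" using tk by (metis SUP_upper UNIV_I)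
    qed
    then show ?thesis using True by simp
  next
    case False
    then have "f k t = 0" for k using sub[of k] unfolding f_def by (auto split: split_indicator)
    then show ?thesis using False by simp
  qed
  have "(\<integral>\<^sup>+t. ennreal (g t) * indicator J1 t \<partial>lborel) = (\<integral>\<^sup>+t. (SUP k. f k t) \<partial>lborel)"
    using pt by simp
  also have "\<dots> = (SUP k. integral\<^sup>N lborel (f k))"
    by (rule nn_integral_monotone_convergence_SUP[OF finc meas])
  also have "\<dots> \<le> ennreal K"
    by (rule SUP_least) (use bnd sJ in \<open>auto simp: f_def\<close>)
  finally show ?thesis unfolding J1_def .
qed


lemma dD_lemma:
  fixes x y w :: "real \<Rightarrow> real" and t lam :: real and n :: nat
  assumes dx: "(x has_real_derivative (x t ^ 2 - x t * y t + real n - 1 - lam * w t ^ 2)) (at t)"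
   and dy: "(y has_real_derivative (x t * y t - real n * x t ^ 2 - lam * w t ^ 2)) (at t)"
   and dw: "(w has_real_derivative (x t * w t)) (at t)"
  shows "((\<lambda>t. x t ^ 2 - x t * y t + real n - 1 - lam * w t ^ 2) has_real_derivative
     (x t ^ 2 - x t * y t + real n - 1 - lam * w t ^ 2) * (3 * x t - y t) + (real n - 1) * x t * (x t ^ 2 - 1)) (at t)"
proof -
  have "((\<lambda>t. x t ^ 2 - x t * y t + real n - 1 - lam * w t ^ 2) has_real_derivative
     (2 * x t * (x t ^ 2 - x t * y t + real n - 1 - lam * w t ^ 2)
      - ((x t ^ 2 - x t * y t + real n - 1 - lam * w t ^ 2) * y t + x t * (x t * y t - real n * x t ^ 2 - lam * w t ^ 2))
      - lam * (2 * w t * (x t * w t)))) (at t)"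
    by (rule derivative_eq_intros dx dy dw refl | simp)+ 
  then show ?thesis
    by (rule DERIV_cong) (simp add: algebra_simps power2_eq_square power3_eq_cube)
qed

lemma dq_lemma:
  fixes x y w :: "real \<Rightarrow> real" and t lam :: real and n :: nat
  assumes dx: "(x has_real_derivative (x t ^ 2 - x t * y t + real n - 1 - lam * w t ^ 2)) (at t)"
   and dy: "(y has_real_derivative (x t * y t - real n * x t ^ 2 - lam * w t ^ 2)) (at t)"
  shows "((\<lambda>t. - (x t + y t)) has_real_derivative (real n - 1) * (x t ^ 2 - 1) + 2 * lam * w t ^ 2) (at t)"
proof -
  have "((\<lambda>t. - (x t + y t)) has_real_derivative - ((x t ^ 2 - x t * y t + real n - 1 - lam * w t ^ 2)
     + (x t * y t - real n * x t ^ 2 - lam * w t ^ 2))) (at t)"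
    by (rule derivative_eq_intros dx dy refl | simp)+
  then show ?thesis by (rule DERIV_cong) (simp add: algebra_simps)
qed

lemma dR_lemma:
  fixes x y w :: "real \<Rightarrow> real" and t lam :: real and n :: nat
  assumes dx: "(x has_real_derivative (x t ^ 2 - x t * y t + real n - 1 - lam * w t ^ 2)) (at t)"
   and dy: "(y has_real_derivative (x t * y t - real n * x t ^ 2 - lam * w t ^ 2)) (at t)"
   and dw: "(w has_real_derivative (x t * w t)) (at t)" and wp: "w t > 0"
  shows "((\<lambda>t. (x t - y t) / w t ^ 2) has_real_derivative (real n - 1) * (x t ^ 2 + 1) / w t ^ 2) (at t)"
proof -
  have du: "((\<lambda>t. x t - y t) has_real_derivative
     (x t ^ 2 - x t * y t + real n - 1 - lam * w t ^ 2) - (x t * y t - real n * x t ^ 2 - lam * w t ^ 2)) (at t)"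
    by (rule DERIV_diff[OF dx dy])
  have dw2: "((\<lambda>t. w t ^ 2) has_real_derivative of_nat 2 * ((x t * w t) * w t ^ (2 - Suc 0))) (at t)"
    by (rule DERIV_power[OF dw])
  have "w t ^ 2 \<noteq> 0" using wp by simp
  from DERIV_divide[OF du dw2 this] show ?thesis
    by (rule DERIV_cong) (use wp in \<open>simp add: field_simps power2_eq_square\<close>)
qed

lemma dF_lemma:
  fixes x y w :: "real \<Rightarrow> real" and t lam :: real and n :: nat
  assumes dx: "(x has_real_derivative (x t ^ 2 - x t * y t + real n - 1 - lam * w t ^ 2)) (at t)"
   and dw: "(w has_real_derivative (x t * w t)) (at t)" and xp: "x t > 0"
  shows "((\<lambda>t. - 2 * w t / x t) has_real_derivative
     2 * w t * ((x t ^ 2 - x t * y t + real n - 1 - lam * w t ^ 2) - x t ^ 2) / x t ^ 2) (at t)"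
proof -
  have d1: "((\<lambda>t. - 2 * w t) has_real_derivative - 2 * (x t * w t)) (at t)"
    by (rule DERIV_cmult[OF dw])
  have "x t \<noteq> 0" using xp by simp
  from DERIV_divide[OF d1 dx this] show ?thesis
    by (rule DERIV_cong) (use xp in \<open>simp add: field_simps power2_eq_square\<close>)
qed



theorem lemma3p7:
  fixes n :: nat and lam :: real and S T :: ereal and w x y :: "real \<Rightarrow> real" and t0 :: real
  assumes "n \<ge> 2" and "lam > 0"
    and "is_maximal_sol n lam S T w x y"
    and "\<forall>t\<in>eIoo S T. w t > 0"
    and "t0 \<in> eIoo S T"
    and "x t0 > 1" and "deriv x t0 > 0"
  shows "(\<integral>\<^sup>+ s \<in> eIoo (ereal t0) T. ennreal (w s) \<partial>lborel) < \<infinity>"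
proof -
  note n2 = assms(1) and lam = assms(2)
  from assms(3) have sol: "is_sol n lam (eIoo S T) w x y" by (simp add: is_maximal_sol_def)
  define I where "I = eIoo S T"
  define D where "D = (\<lambda>t. x t ^ 2 - x t * y t + real n - 1 - lam * w t ^ 2)"
  define q where "q = (\<lambda>t. - (x t + y t))"
  have dw: "(w has_real_derivative (x t * w t)) (at t)" if "t \<in> I" for t
    using sol that unfolding is_sol_def I_def by blast
  have dx': "(x has_real_derivative (x t ^ 2 - x t * y t + real n - 1 - lam * w t ^ 2)) (at t)" if "t \<in> I" for t
    using sol that unfolding is_sol_def I_def by blast
  have dx: "(x has_real_derivative D t) (at t)" if "t \<in> I" for t
    using dx'[OF that] unfolding D_def .
  have dy: "(y has_real_derivative (x t * y t - real n * x t ^ 2 - lam * w t ^ 2)) (at t)" if "t \<in> I" for t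
    using sol that unfolding is_sol_def I_def by blast
  have dD: "(D has_real_derivative D t * (3 * x t - y t) + (real n - 1) * x t * (x t ^ 2 - 1)) (at t)"
    if "t \<in> I" for t
    unfolding D_def by (rule dD_lemma[of x t y n lam w, OF dx'[OF that] dy[OF that] dw[OF that]])
  have dq: "(q has_real_derivative (real n - 1) * (x t ^ 2 - 1) + 2 * lam * w t ^ 2) (at t)" if "t \<in> I" for t
    unfolding q_def by (rule dq_lemma[of x t y n lam w, OF dx'[OF that] dy[OF that]])
  have wpos: "w t > 0" if "t \<in> I" for t using assms(4) that unfolding I_def by blast
  have t0I: "S < ereal t0" "ereal t0 < T" using assms(5) unfolding eIoo_def by auto
  define J where "J = {t. t0 \<le> t \<and> ereal t < T}"
  have JI: "t \<in> I" if "t \<in> J" for t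
    using that t0I unfolding J_def I_def eIoo_def by auto (meson ereal_less_eq(3) order.strict_trans2)
  have Jconv: "s \<in> J" if "t \<in> J" "t0 \<le> s" "s \<le> t" for s t
    using that unfolding J_def by auto (meson ereal_less_eq(3) order.strict_trans1)
  have t0J: "t0 \<in> J" using t0I unfolding J_def by simp
  have D0: "D t0 > 0"
    using assms(7) DERIV_imp_deriv[OF dx[OF JI[OF t0J]]] by simp
  have Dpos: "D s > 0" if sJ: "s \<in> J" for s
  proof (rule ccontr)
    assume "\<not> D s > 0"
    then have Ds: "D s \<le> 0" by simp
    have ts: "t0 \<le> s" using sJ unfolding J_def by simp
    have subI: "t \<in> I" if "t0 \<le> t" "t \<le> s" for t using JI Jconv[OF sJ that] .
    have contD: "continuous_on {t0..s} D"
      by (intro continuous_at_imp_continuous_on ballI, rule DERIV_isCont[OF dD[OF subI]]) auto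
    have contx: "continuous_on {t0..s} x"
      by (intro continuous_at_imp_continuous_on ballI, rule DERIV_isCont[OF dx[OF subI]]) auto
    have conty: "continuous_on {t0..s} y"
      by (intro continuous_at_imp_continuous_on ballI, rule DERIV_isCont[OF dy[OF subI]]) auto
    define Z where "Z = {t0..s} \<inter> D -` {..0}"
    have clZ: "closed Z" unfolding Z_def by (rule continuous_closed_preimage[OF contD]) auto
    have sZ: "s \<in> Z" using Ds ts unfolding Z_def by auto
    have bdd: "bdd_below Z" unfolding Z_def by (rule bdd_belowI[of _ t0]) auto
    define tau where "tau = Inf Z"
    have tauZ: "tau \<in> Z" unfolding tau_def using closed_contains_Inf[OF _ bdd clZ] sZ by auto
    have tau1: "t0 \<le> tau" "tau \<le> s" "D tau \<le> 0" using tauZ unfolding Z_def by auto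
    have Dlt: "D t > 0" if "t0 \<le> t" "t < tau" for t
    proof (rule ccontr)
      assume "\<not> D t > 0"
      then have "t \<in> Z" using that tau1 unfolding Z_def by auto
      then have "tau \<le> t" unfolding tau_def using bdd by (rule cInf_lower)
      with that show False by simp
    qed
    have taune: "tau \<noteq> t0" using tau1 D0 by auto
    have xge: "x t \<ge> x t0" if "t0 \<le> t" "t \<le> tau" for t
    proof (rule DERIV_nonneg_imp_increasing_open[OF that(1)])
      fix r assume "t0 < r" "r < t"
      then show "\<exists>y. (x has_real_derivative y) (at r) \<and> 0 \<le> y"
        using dx[OF subI] Dlt that tau1 by (meson less_imp_le order.strict_trans2 order.trans)
    next
      show "continuous_on {t0..t} x" using that tau1
        by (intro continuous_on_subset[OF contx]) auto
    qed
    have x1: "x t > 1" if "t0 \<le> t" "t \<le> tau" for t using xge[OF that] assms(6) by simp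
    have contE: "continuous_on {t0..tau} (\<lambda>t. 3 * x t - y t)"
      using tau1 by (intro continuous_intros continuous_on_subset[OF contx] continuous_on_subset[OF conty]) auto
    have "bounded ((\<lambda>t. 3 * x t - y t) ` {t0..tau})"
      by (rule compact_imp_bounded[OF compact_continuous_image[OF contE compact_Icc]])
    then obtain M where M: "\<And>t. t \<in> {t0..tau} \<Longrightarrow> \<bar>3 * x t - y t\<bar> \<le> M"
      unfolding bounded_real by (auto simp del: atLeastAtMost_iff)
    define G where "G = (\<lambda>t. D t * exp (M * t))"
    have dE: "((\<lambda>t. exp (M * t)) has_real_derivative exp (M * t) * M) (at t)" for t
      by (auto intro!: derivative_eq_intros)
    have dG: "(G has_real_derivative D t * (exp (M * t) * M) +
        (D t * (3 * x t - y t) + (real n - 1) * x t * (x t ^ 2 - 1)) * exp (M * t)) (at t)"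
      if "t0 \<le> t" "t \<le> s" for t
      unfolding G_def by (rule DERIV_mult'[OF dD[OF subI[OF that]] dE])
    have "G t0 \<le> G tau"
    proof (rule DERIV_nonneg_imp_increasing_open[OF tau1(1)])
      fix r assume r: "t0 < r" "r < tau"
      have Dr: "D r > 0" using Dlt r by simp
      have "3 * x r - y r + M \<ge> 0" using M[of r] r by auto
      then have A: "D r * (3 * x r - y r + M) \<ge> 0" using Dr by simp
      have B: "(real n - 1) * x r * (x r ^ 2 - 1) \<ge> 0"
        using x1[of r] r n2 by (simp add: one_le_power)
      have eq: "D r * (exp (M * r) * M) +
        (D r * (3 * x r - y r) + (real n - 1) * x r * (x r ^ 2 - 1)) * exp (M * r)
        = (D r * (3 * x r - y r + M) + (real n - 1) * x r * (x r ^ 2 - 1)) * exp (M * r)"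
        by (simp add: algebra_simps)
      have "D r * (exp (M * r) * M) +
        (D r * (3 * x r - y r) + (real n - 1) * x r * (x r ^ 2 - 1)) * exp (M * r) \<ge> 0"
        unfolding eq using A B by simp
      then show "\<exists>y. (G has_real_derivative y) (at r) \<and> 0 \<le> y"
        using dG[of r] r tau1 by auto
    next
      show "continuous_on {t0..tau} G"
        by (intro continuous_at_imp_continuous_on ballI, rule DERIV_isCont[OF dG]) (use tau1 in auto)
    qed
    moreover have "G t0 > 0" using D0 unfolding G_def by simp
    moreover have "G tau \<le> 0" using tau1 unfolding G_def by (simp add: mult_nonpos_nonneg)
    ultimately show False by simp
  qed
  have xmono: "x s \<le> x t" if "s \<in> J" "t \<in> J" "s \<le> t" for s t
    by (rule mono_deriv[OF that(3), of x D]) (use that Dpos JI Jconv dx J_def in \<open>auto intro: less_imp_le\<close>)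
  have xa: "x t \<ge> x t0" if "t \<in> J" for t using xmono[OF t0J that] that unfolding J_def by simp
  have x1: "x t > 1" if "t \<in> J" for t using xa[OF that] assms(6) by simp
  have wmono: "w s \<le> w t" if "s \<in> J" "t \<in> J" "s \<le> t" for s t
  proof (rule mono_deriv[OF that(3), of w "\<lambda>t. x t * w t"])
    fix r assume r: "s \<le> r" "r \<le> t"
    then have rJ: "r \<in> J" using that Jconv unfolding J_def by auto
    show "(w has_real_derivative x r * w r) (at r)" using dw[OF JI[OF rJ]] .
    show "x r * w r \<ge> 0" using x1[OF rJ] wpos[OF JI[OF rJ]] by simp
  qed
  define w0 where "w0 = w t0"
  have w0pos: "w0 > 0" unfolding w0_def using wpos[OF JI[OF t0J]] .
  have wge: "w t \<ge> w0" if "t \<in> J" for t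
    using wmono[OF t0J that] that unfolding J_def w0_def by simp
  define al where "al = 2 * lam * w0 ^ 2"
  have alpos: "al > 0" unfolding al_def using lam w0pos by simp
  have dqge: "(real n - 1) * (x t ^ 2 - 1) + 2 * lam * w t ^ 2 \<ge> al" if "t \<in> J" for t
  proof -
    have "(real n - 1) * (x t ^ 2 - 1) \<ge> 0" using x1[OF that] n2 by (simp add: one_le_power)
    moreover have "w t ^ 2 \<ge> w0 ^ 2" using wge[OF that] w0pos by (simp add: power_mono)
    moreover have "lam * w0 ^ 2 \<le> lam * w t ^ 2" using \<open>w t ^ 2 \<ge> w0 ^ 2\<close> lam by simp
    ultimately show ?thesis unfolding al_def by simp
  qed
  have qlin: "q t \<ge> q s + al * (t - s)" if "s \<in> J" "t \<in> J" "s \<le> t" for s t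
  proof -
    have "q s - al * s \<le> q t - al * t"
    proof (rule mono_deriv[OF that(3), of "\<lambda>t. q t - al * t"
        "\<lambda>t. (real n - 1) * (x t ^ 2 - 1) + 2 * lam * w t ^ 2 - al"])
      fix r assume r: "s \<le> r" "r \<le> t"
      then have rJ: "r \<in> J" using that Jconv unfolding J_def by auto
      show "((\<lambda>t. q t - al * t) has_real_derivative (real n - 1) * (x r ^ 2 - 1) + 2 * lam * w r ^ 2 - al) (at r)"
        using dq[OF JI[OF rJ]] by (auto intro!: derivative_eq_intros)
      show "(real n - 1) * (x r ^ 2 - 1) + 2 * lam * w r ^ 2 - al \<ge> 0" using dqge[OF rJ] by simp
    qed
    then show ?thesis by (simp add: algebra_simps)
  qed
  have qmono: "q s \<le> q t" if "s \<in> J" "t \<in> J" "s \<le> t" for s t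
    using qlin[OF that] alpos that(3) by (smt (verit) mult_nonneg_nonneg)
  show ?thesis
  proof (cases "\<exists>B. \<forall>t\<in>J. x t \<le> B")
    case True
    then obtain B where B: "\<And>t. t \<in> J \<Longrightarrow> x t \<le> B" by blast
    show ?thesis
    proof (cases T)
      case PInf
      have inJ: "t \<in> J" if "t0 \<le> t" for t using that PInf unfolding J_def by simp
      define t2 where "t2 = t0 + \<bar>q t0\<bar> / al"
      have t2ge: "t0 \<le> t2" unfolding t2_def using alpos by simp
      have t2J: "t2 \<in> J" using inJ[OF t2ge] .
      have "q t2 \<ge> q t0 + al * (t2 - t0)" using qlin[OF t0J t2J t2ge] .
      also have "al * (t2 - t0) = \<bar>q t0\<bar>" unfolding t2_def using alpos by simp
      finally have q2: "q t2 \<ge> 0" by simp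
      have Dmono: "D t2 \<le> D t" if "t2 \<le> t" for t
      proof (rule mono_deriv[OF that, of D "\<lambda>t. D t * (3 * x t - y t) + (real n - 1) * x t * (x t ^ 2 - 1)"])
        fix r assume r: "t2 \<le> r" "r \<le> t"
        then have rJ: "r \<in> J" using inJ t2ge by simp
        show "(D has_real_derivative D r * (3 * x r - y r) + (real n - 1) * x r * (x r ^ 2 - 1)) (at r)"
          using dD[OF JI[OF rJ]] .
        have "q r \<ge> 0" using qmono[OF t2J rJ r(1)] q2 by simp
        then have "3 * x r - y r \<ge> 0" using x1[OF rJ] unfolding q_def by simp
        then have "D r * (3 * x r - y r) \<ge> 0" using Dpos[OF rJ] by simp
        moreover have "(real n - 1) * x r * (x r ^ 2 - 1) \<ge> 0"
          using x1[OF rJ] n2 by (simp add: one_le_power)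
        ultimately show "D r * (3 * x r - y r) + (real n - 1) * x r * (x r ^ 2 - 1) \<ge> 0" by simp
      qed
      define d where "d = D t2"
      have dpos: "d > 0" unfolding d_def using Dpos[OF t2J] .
      have xlin: "x t \<ge> x t2 + d * (t - t2)" if "t2 \<le> t" for t
      proof -
        have "x t2 - d * t2 \<le> x t - d * t"
        proof (rule mono_deriv[OF that, of "\<lambda>t. x t - d * t" "\<lambda>t. D t - d"])
          fix r assume r: "t2 \<le> r" "r \<le> t"
          then have rJ: "r \<in> J" using inJ t2ge by simp
          show "((\<lambda>t. x t - d * t) has_real_derivative D r - d) (at r)"
            using dx[OF JI[OF rJ]] by (auto intro!: derivative_eq_intros)
          show "D r - d \<ge> 0" using Dmono[OF r(1)] unfolding d_def by simp
        qed
        then show ?thesis by (simp add: algebra_simps)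
      qed
      define t3 where "t3 = t2 + (\<bar>B\<bar> + \<bar>x t2\<bar> + 1) / d"
      have t3ge: "t2 \<le> t3" unfolding t3_def using dpos by simp
      have "x t3 \<ge> x t2 + d * (t3 - t2)" using xlin[OF t3ge] .
      also have "d * (t3 - t2) = \<bar>B\<bar> + \<bar>x t2\<bar> + 1" unfolding t3_def using dpos by simp
      finally have "x t3 > B" by linarith
      moreover have "x t3 \<le> B" using B[OF inJ] t2ge t3ge by simp
      ultimately show ?thesis by simp
    next
      case (real Tr)
      have Bpos: "B > 0" using B[OF t0J] assms(6) by simp
      have t0Tr: "t0 < Tr" using t0I real by simp
      define W where "W = w0 * exp (B * (Tr - t0))"
      have wle: "w t \<le> W" if tJ: "t \<in> J" for t
      proof -
        have tt: "t0 \<le> t" "t < Tr" using tJ real unfolding J_def by auto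
        have "- (w t0 * exp (- (B * t0))) \<le> - (w t * exp (- (B * t)))"
        proof (rule mono_deriv[OF tt(1), of "\<lambda>s. - (w s * exp (- (B * s)))" "\<lambda>r. w r * exp (- (B * r)) * (B - x r)"])
          fix r assume r: "t0 \<le> r" "r \<le> t"
          then have rJ: "r \<in> J" using tJ Jconv by blast
          show "((\<lambda>s. - (w s * exp (- (B * s)))) has_real_derivative w r * exp (- (B * r)) * (B - x r)) (at r)"
            using dw[OF JI[OF rJ]] by (auto intro!: derivative_eq_intros simp: algebra_simps)
          show "w r * exp (- (B * r)) * (B - x r) \<ge> 0"
            using wpos[OF JI[OF rJ]] B[OF rJ] by simp
        qed
        then have "w t * exp (- (B * t)) \<le> w0 * exp (- (B * t0))" unfolding w0_def by simp
        then have "w t * exp (- (B * t)) * exp (B * t) \<le> w0 * exp (- (B * t0)) * exp (B * t)"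
          by (simp add: mult_right_mono)
        then have "w t \<le> w0 * exp (B * (t - t0))"
          by (simp add: mult.assoc flip: exp_add) (simp add: algebra_simps)
        also have "\<dots> \<le> W" unfolding W_def using w0pos Bpos tt by simp
        finally show ?thesis .
      qed
      have "(\<integral>\<^sup>+ s \<in> eIoo (ereal t0) T. ennreal (w s) \<partial>lborel)
          \<le> (\<integral>\<^sup>+ s. ennreal W * indicator {t0..Tr} s \<partial>lborel)"
      proof (rule nn_integral_mono)
        fix s
        show "ennreal (w s) * indicator (eIoo (ereal t0) T) s \<le> ennreal W * indicator {t0..Tr} s"
        proof (cases "s \<in> eIoo (ereal t0) T")
          case True
          then have "s \<in> J" "s \<in> {t0..Tr}" unfolding J_def eIoo_def using real by auto
          then show ?thesis using wle[of s] True by (simp add: ennreal_leI)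
        qed simp
      qed
      also have "\<dots> = ennreal W * emeasure lborel {t0..Tr}"
        by (rule nn_integral_cmult_indicator) simp
      also have "\<dots> = ennreal W * ennreal (Tr - t0)" using t0Tr by simp
      also have "\<dots> < \<infinity>" by (simp add: ennreal_mult_less_top)
      finally show ?thesis .
    next
      case MInf with t0I show ?thesis by simp
    qed
  next
    case False
    then have unb: "\<And>B. \<exists>t\<in>J. x t > B" by (meson not_le)
    define a where "a = x t0"
    have a1: "a > 1" unfolding a_def using assms(6) .
    define c where "c = (real n - 1) * (1 - 1 / a ^ 2) / (real n + 1)"
    have cpos: "c > 0" unfolding c_def using a1 n2 by (simp add: power_less_one_iff)
    have "\<exists>t2\<in>J. q t2 \<ge> 0"
    proof (rule ccontr)
      assume "\<not> (\<exists>t2\<in>J. q t2 \<ge> 0)"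
      then have neg: "\<And>t. t \<in> J \<Longrightarrow> q t < 0" by (meson not_le)
      have cD: "c * D r \<le> (real n - 1) * (x r ^ 2 - 1)" if rJ: "r \<in> J" for r
      proof -
        have xr: "x r \<ge> a" "x r > 1" using xa[OF rJ] x1[OF rJ] unfolding a_def by auto
        have "x r * (- x r) < x r * y r" using neg[OF rJ] xr unfolding q_def
          by (intro mult_strict_left_mono) auto
        then have "- (x r * y r) < x r ^ 2" by (simp add: power2_eq_square)
        moreover have "real n - 1 \<le> (real n - 1) * x r ^ 2"
          using xr n2 by (simp add: one_le_power)
        moreover have "lam * w r ^ 2 \<ge> 0" using lam by simp
        ultimately have "D r \<le> (real n + 1) * x r ^ 2" unfolding D_def by (simp add: algebra_simps)
        then have "c * D r \<le> c * ((real n + 1) * x r ^ 2)" using cpos by simp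
        also have "\<dots> = (real n - 1) * (1 - 1 / a ^ 2) * x r ^ 2"
          unfolding c_def by simp
        also have "\<dots> = (real n - 1) * (x r ^ 2 - x r ^ 2 / a ^ 2)"
          by (simp add: algebra_simps)
        also have "\<dots> \<le> (real n - 1) * (x r ^ 2 - 1)"
        proof -
          have "a ^ 2 \<le> x r ^ 2" using xr a1 by (simp add: power_mono)
          then have "1 \<le> x r ^ 2 / a ^ 2" using a1 by simp
          then show ?thesis using n2 by (simp add: mult_left_mono)
        qed
        finally show ?thesis .
      qed
      have Hlin: "q t \<ge> q t0 + c * (x t - a)" if tJ: "t \<in> J" for t
      proof -
        have t0t: "t0 \<le> t" using tJ unfolding J_def by simp
        have "q t0 - c * x t0 \<le> q t - c * x t"
        proof (rule mono_deriv[OF t0t, of "\<lambda>t. q t - c * x t"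
            "\<lambda>t. (real n - 1) * (x t ^ 2 - 1) + 2 * lam * w t ^ 2 - c * D t"])
          fix r assume r: "t0 \<le> r" "r \<le> t"
          then have rJ: "r \<in> J" using tJ Jconv by blast
          show "((\<lambda>t. q t - c * x t) has_real_derivative (real n - 1) * (x r ^ 2 - 1) + 2 * lam * w r ^ 2 - c * D r) (at r)"
            using dq[OF JI[OF rJ]] dx[OF JI[OF rJ]] by (auto intro!: derivative_eq_intros)
          show "(real n - 1) * (x r ^ 2 - 1) + 2 * lam * w r ^ 2 - c * D r \<ge> 0"
          proof -
            have "2 * lam * w r ^ 2 \<ge> 0" using lam by simp
            then show ?thesis using cD[OF rJ] by simp
          qed
        qed
        then show ?thesis unfolding a_def by (simp add: algebra_simps)
      qed
      obtain t where tJ: "t \<in> J" and xt: "x t > a + (\<bar>q t0\<bar> + 1) / c" using unb by blast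
      have "c * (x t - a) > c * ((\<bar>q t0\<bar> + 1) / c)" using xt cpos
        by (intro mult_strict_left_mono) auto
      then have "c * (x t - a) > \<bar>q t0\<bar> + 1" using cpos by simp
      then have "q t > 0" using Hlin[OF tJ] by linarith
      with neg[OF tJ] show False by simp
    qed
    then obtain t2 where t2J: "t2 \<in> J" and q2: "q t2 \<ge> 0" by blast
    define u2 where "u2 = x t2 - y t2"
    have u2pos: "u2 > 0" using q2 x1[OF t2J] unfolding u2_def q_def by simp
    define eps where "eps = lam * w t2 ^ 2 / u2"
    obtain t1 where t1J: "t1 \<in> J" and xt1: "x t1 > max (4 * eps) (x t2)" using unb by blast
    have t21: "t2 \<le> t1"
    proof (rule ccontr)
      assume "\<not> t2 \<le> t1"
      then have "x t1 \<le> x t2" using xmono[OF t1J t2J] by simp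
      with xt1 show False by simp
    qed
    have keyD: "D t \<ge> 3 / 2 * x t ^ 2" if tJ: "t \<in> J" and t1t: "t1 \<le> t" for t
    proof -
      have t2t: "t2 \<le> t" using t21 t1t by simp
      have "q t \<ge> 0" using qmono[OF t2J tJ t2t] q2 by simp
      then have ut: "x t - y t \<ge> 2 * x t" unfolding q_def by simp
      have xt: "x t > 1" using x1[OF tJ] .
      have upos: "x t - y t > 0" using ut xt by simp
      have "(x t2 - y t2) / w t2 ^ 2 \<le> (x t - y t) / w t ^ 2"
      proof (rule mono_deriv[OF t2t, of "\<lambda>t. (x t - y t) / w t ^ 2" "\<lambda>t. (real n - 1) * (x t ^ 2 + 1) / w t ^ 2"])
        fix r assume r: "t2 \<le> r" "r \<le> t"
        then have rJ: "r \<in> J" using tJ Jconv t2J unfolding J_def by auto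
        show "((\<lambda>t. (x t - y t) / w t ^ 2) has_real_derivative (real n - 1) * (x r ^ 2 + 1) / w r ^ 2) (at r)"
          by (rule dR_lemma[of x r y n lam w, OF dx'[OF JI[OF rJ]] dy[OF JI[OF rJ]] dw[OF JI[OF rJ]] wpos[OF JI[OF rJ]]])
        show "(real n - 1) * (x r ^ 2 + 1) / w r ^ 2 \<ge> 0" using n2 by simp
      qed
      then have "u2 * w t ^ 2 \<le> (x t - y t) * w t2 ^ 2"
        using wpos[OF JI[OF tJ]] wpos[OF JI[OF t2J]] unfolding u2_def by (simp add: field_simps)
      then have "lam * (u2 * w t ^ 2) \<le> lam * ((x t - y t) * w t2 ^ 2)"
        using lam by (intro mult_left_mono) auto
      then have "lam * w t ^ 2 * u2 \<le> lam * w t2 ^ 2 * (x t - y t)"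
        by (simp add: algebra_simps)
      then have lw: "lam * w t ^ 2 \<le> eps * (x t - y t)"
        using u2pos unfolding eps_def by (simp add: field_simps)
      have "eps \<le> x t / 4" using xt1 xmono[OF t1J tJ t1t] by simp
      then have "eps * (x t - y t) \<le> x t / 4 * (x t - y t)" using upos by (simp add: mult_right_mono)
      with lw have "lam * w t ^ 2 \<le> x t * (x t - y t) / 4" by simp
      then have "D t \<ge> 3 / 4 * (x t * (x t - y t))" unfolding D_def using n2
        by (simp add: algebra_simps power2_eq_square)
      moreover have "x t * (x t - y t) \<ge> x t * (2 * x t)" using ut xt by (simp add: mult_left_mono)
      ultimately show ?thesis by (simp add: power2_eq_square)
    qed
    define J1 where "J1 = {t. t1 \<le> t \<and> ereal t < T}"
    have J1J: "t \<in> J" if "t \<in> J1" for t using that t1J unfolding J1_def J_def by auto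
    have t1T: "ereal t1 < T" using t1J unfolding J_def by simp
    define K where "K = 2 * w t1 / x t1"
    have contw: "continuous_on J1 w"
      by (intro continuous_at_imp_continuous_on ballI, rule DERIV_isCont[OF dw[OF JI[OF J1J]]])
    have bnd: "(\<integral>\<^sup>+t. ennreal (w t) * indicator {t1..s} t \<partial>lborel) \<le> ennreal K"
      if s1: "t1 \<le> s" and sT: "ereal s < T" for s
    proof -
      have sub: "r \<in> J1" if "r \<in> {t1..s}" for r using that s1 sT unfolding J1_def
        by auto (meson ereal_less_eq(3) order.strict_trans1)
      define f where "f = (\<lambda>t. 2 * w t * (D t - x t ^ 2) / x t ^ 2)"
      define F where "F = (\<lambda>t. - 2 * w t / x t)"
      define g where "g = (\<lambda>t. indicator {t1..s} t *\<^sub>R f t)"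
      have contf: "continuous_on {t1..s} f"
      proof (intro continuous_at_imp_continuous_on ballI)
        fix r assume "r \<in> {t1..s}"
        then have rI: "r \<in> I" using sub J1J JI by blast
        have "isCont w r" "isCont x r" "isCont D r"
          using DERIV_isCont[OF dw[OF rI]] DERIV_isCont[OF dx[OF rI]] DERIV_isCont[OF dD[OF rI]] by auto
        moreover have "x r \<noteq> 0" using x1[OF J1J[OF sub]] \<open>r \<in> {t1..s}\<close> by fastforce
        ultimately show "isCont f r" unfolding f_def by (intro continuous_intros) auto
      qed
      have gmeas: "g \<in> borel_measurable borel" unfolding g_def
        by (rule borel_measurable_continuous_on_indicator[OF _ contf]) simp
      have fge: "f r \<ge> w r" if "r \<in> {t1..s}" for r
      proof -
        have rJ: "r \<in> J" using J1J sub that by blast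
        have "D r \<ge> 3 / 2 * x r ^ 2" using keyD[OF rJ] that by simp
        then have "D r - x r ^ 2 \<ge> x r ^ 2 / 2" by simp
        moreover have "x r ^ 2 > 0" using x1[OF rJ] by simp
        moreover have "w r > 0" using wpos[OF JI[OF rJ]] .
        ultimately have "2 * w r * (D r - x r ^ 2) \<ge> 2 * w r * (x r ^ 2 / 2)"
          by (intro mult_left_mono) auto
        then have "2 * w r * (D r - x r ^ 2) \<ge> w r * x r ^ 2" by simp
        then show ?thesis unfolding f_def using \<open>x r ^ 2 > 0\<close> by (simp add: le_divide_eq)
      qed
      have FTC: "(\<integral>\<^sup>+t. ennreal (g t) * indicator {t1..s} t \<partial>lborel) = F s - F t1"
      proof (rule nn_integral_FTC_Icc[OF gmeas _ _ s1])
        fix r assume r: "r \<in> {t1..s}"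
        then have rJ: "r \<in> J" using J1J sub by blast
        have "(F has_real_derivative f r) (at r)"
          unfolding F_def f_def D_def
          by (rule dF_lemma[of x r y n lam w, OF dx'[OF JI[OF rJ]] dw[OF JI[OF rJ]]]) (use x1[OF rJ] in simp)
        then show "(F has_real_derivative g r) (at r)" unfolding g_def using r by simp
        show "0 \<le> g r" unfolding g_def using r fge[OF r] wpos[OF JI[OF rJ]] by simp
      qed
      have "(\<integral>\<^sup>+t. ennreal (w t) * indicator {t1..s} t \<partial>lborel)
          \<le> (\<integral>\<^sup>+t. ennreal (g t) * indicator {t1..s} t \<partial>lborel)"
      proof (rule nn_integral_mono)
        fix r
        show "ennreal (w r) * indicator {t1..s} r \<le> ennreal (g r) * indicator {t1..s} r"
          using fge[of r] unfolding g_def by (auto split: split_indicator intro: ennreal_leI)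
      qed
      also have "\<dots> = ennreal (F s - F t1)" using FTC by simp
      also have "\<dots> \<le> ennreal K"
      proof (rule ennreal_leI)
        have sJ: "s \<in> J" using sub[of s] s1 J1J by auto
        have "F s \<le> 0" unfolding F_def using wpos[OF JI[OF sJ]] x1[OF sJ] by simp
        then show "F s - F t1 \<le> K" unfolding F_def K_def by simp
      qed
      finally show ?thesis .
    qed
    have tail: "(\<integral>\<^sup>+t. ennreal (w t) * indicator J1 t \<partial>lborel) \<le> ennreal K"
      unfolding J1_def by (rule tail_lemma[OF t1T contw[unfolded J1_def] bnd])
    have J1meas: "J1 \<in> sets borel" unfolding J1_def by measurable
    have m2: "(\<lambda>t. ennreal (w t) * indicator J1 t) \<in> borel_measurable lborel"
    proof -
      have "(\<lambda>t. indicator J1 t *\<^sub>R w t) \<in> borel_measurable borel"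
        by (rule borel_measurable_continuous_on_indicator[OF J1meas contw])
      then have "(\<lambda>t. ennreal (indicator J1 t *\<^sub>R w t)) \<in> borel_measurable borel" by measurable
      moreover have "(\<lambda>t. ennreal (indicator J1 t *\<^sub>R w t)) = (\<lambda>t. ennreal (w t) * indicator J1 t)"
        by (auto simp: fun_eq_iff split: split_indicator)
      ultimately show ?thesis by simp
    qed
    have t01: "t0 \<le> t1" using t1J unfolding J_def by simp
    have "(\<integral>\<^sup>+ s \<in> eIoo (ereal t0) T. ennreal (w s) \<partial>lborel)
        \<le> (\<integral>\<^sup>+ t. ennreal (w t1) * indicator {t0..t1} t + ennreal (w t) * indicator J1 t \<partial>lborel)"
    proof (rule nn_integral_mono)
      fix r
      show "ennreal (w r) * indicator (eIoo (ereal t0) T) r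
          \<le> ennreal (w t1) * indicator {t0..t1} r + ennreal (w r) * indicator J1 r"
      proof (cases "r \<in> eIoo (ereal t0) T")
        case True
        then have rJ: "r \<in> J" unfolding eIoo_def J_def by auto
        show ?thesis
        proof (cases "r \<le> t1")
          case True
          then have "w r \<le> w t1" using wmono[OF rJ t1J] by simp
          moreover have "r \<in> {t0..t1}" using True rJ unfolding J_def by auto
          ultimately show ?thesis using \<open>r \<in> eIoo (ereal t0) T\<close>
            by (simp add: ennreal_leI add_increasing2)
        next
          case False
          then have "r \<in> J1" using rJ unfolding J1_def J_def by auto
          then show ?thesis using \<open>r \<in> eIoo (ereal t0) T\<close> by simp
        qed
      qed simp
    qed
    also have "\<dots> = (\<integral>\<^sup>+ t. ennreal (w t1) * indicator {t0..t1} t \<partial>lborel)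
        + (\<integral>\<^sup>+ t. ennreal (w t) * indicator J1 t \<partial>lborel)"
      by (rule nn_integral_add) (use m2 in auto)
    also have "\<dots> = ennreal (w t1) * ennreal (t1 - t0) + (\<integral>\<^sup>+ t. ennreal (w t) * indicator J1 t \<partial>lborel)"
      using t01 by (subst nn_integral_cmult_indicator) auto
    also have "\<dots> \<le> ennreal (w t1) * ennreal (t1 - t0) + ennreal K"
      using tail by (rule add_left_mono)
    also have "\<dots> < \<infinity>" by (simp add: ennreal_mult_less_top)
    finally show ?thesis .
  qed
qed
end
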